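(* Let $\kappa$ be an infinite cardinal and let $(F_\xi)_{\xi\in\kappa}$ be a family of nonempty finite sets such that every element $x$ belongs to $F_\xi$ for fewer than $\kappa$ values of $\xi$. Then there exist a set $D\subseteq\kappa$ with $|D|=\kappa$ and a choice of elements $x_\xi\in F_\xi$ for $\xi\in D$ such that, whenever $\alpha,\beta\in D$ and $x_\alpha\in F_\beta$, we have $x_\alpha=x_\beta$. *)

theory Defs
  imports "HOL-Library.Equipollence"
begin

end

theory Submission
  imports Defs
begin

unbundle cardinal_syntax

lemma lepoll_card: "A \<lesssim> B \<longleftrightarrow> |A| \<le>o |B|"
  by (simp add: lepoll_def card_of_ordLeq[symmetric])

lemma lesspoll_iff_not: "A \<prec> B \<longleftrightarrow> \<not> B \<lesssim> A"
  by (meson lepoll_antisym lepoll_card lesspoll_def eqpoll_imp_lepoll eqpoll_sym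
        card_of_Well_order not_ordLeq_iff_ordLess ordLess_imp_ordLeq)

lemma lesspoll_card: "A \<prec> B \<longleftrightarrow> |A| <o |B|"
  by (simp add: lesspoll_iff_not lepoll_card not_ordLeq_iff_ordLess card_of_Well_order)

lemma lesspoll_asym: "A \<prec> B \<Longrightarrow> \<not> B \<prec> A"
  using lesspoll_iff_not lesspoll_imp_lepoll by blast

lemma Un_lesspoll: "infinite K \<Longrightarrow> A \<prec> K \<Longrightarrow> B \<prec> K \<Longrightarrow> A \<union> B \<prec> K"
  by (simp add: lesspoll_card card_of_Un_ordLess_infinite)

lemma lepoll_finite: "A \<lesssim> B \<Longrightarrow> finite B \<Longrightarrow> finite A"
  by (meson finite_surj lepoll_iff)

lemma Times_sq_lesspoll:
  assumes "infinite K" "A \<lesssim> B" "B \<prec> K" shows "A \<times> B \<prec> K"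
proof (cases "finite B")
  case True
  then have "finite A" using assms(2) lepoll_finite by blast
  then have "finite (A \<times> B)" using True by simp
  then show ?thesis using assms(1) finite_lesspoll_infinite by blast
next
  case False
  have "A \<times> B \<lesssim> B \<times> B" using assms(2) times_lepoll_mono by blast
  also have "B \<times> B \<lesssim> B"
    using False card_of_Times_same_infinite lepoll_card ordIso_iff_ordLeq by blast
  also have "B \<prec> K" by fact
  finally show ?thesis .
qed

lemma Times_lesspoll:
  assumes "infinite K" "A \<prec> K" "B \<prec> K" shows "A \<times> B \<prec> K"
proof (cases "A \<lesssim> B")
  case True
  then show ?thesis using Times_sq_lesspoll assms by blast
next
  case False
  then have "B \<lesssim> A" using lesspoll_iff_not lesspoll_imp_lepoll by blast
  then have "B \<times> A \<prec> K" using Times_sq_lesspoll assms by blast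
  then show ?thesis using times_commute_eqpoll eq_lesspoll_trans by blast
qed

lemma UN_lepoll_Times: "(\<And>i. i \<in> I \<Longrightarrow> T i \<lesssim> W) \<Longrightarrow> (\<Union>i\<in>I. T i) \<lesssim> I \<times> W"
proof -
  assume a: "\<And>i. i \<in> I \<Longrightarrow> T i \<lesssim> W"
  have "(\<Union>i\<in>I. T i) \<lesssim> Sigma I T" using card_of_UNION_Sigma lepoll_card by blast
  also have "Sigma I T \<lesssim> Sigma I (\<lambda>_. W)" by (rule Sigma_lepoll_mono) (auto simp: a)
  finally show ?thesis .
qed

lemma finite_UN_lesspoll:
  assumes "finite I" "infinite K" shows "(\<And>i. i \<in> I \<Longrightarrow> T i \<prec> K) \<Longrightarrow> (\<Union>i\<in>I. T i) \<prec> K"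
  using assms(1)
proof (induction I rule: finite_induct)
  case empty then show ?case using assms(2) finite_lesspoll_infinite by auto
next
  case (insert x I)
  have "T x \<prec> K" using insert.prems by auto
  moreover have "(\<Union>i\<in>I. T i) \<prec> K" using insert.IH insert.prems by auto
  ultimately show ?case using Un_lesspoll[OF assms(2)] by simp
qed

lemma UN_finite_lepoll:
  assumes "infinite D" "\<And>i. i \<in> D \<Longrightarrow> finite (F i)" shows "(\<Union>i\<in>D. F i) \<lesssim> D"
proof -
  have "|\<Union>i\<in>D. F i| \<le>o |D|"
  proof (rule card_of_UNION_ordLeq_infinite)
    show "|D| \<le>o |D|" using lepoll_card lepoll_refl by blast
    show "\<forall>i\<in>D. |F i| \<le>o |D|" using assms finite_lepoll_infinite lepoll_card by blast
  qed (use assms in auto)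
  then show ?thesis using lepoll_card by blast
qed


lemma sq_lepoll: "infinite B \<Longrightarrow> B \<times> B \<lesssim> B"
  using card_of_Times_same_infinite lepoll_card ordIso_iff_ordLeq by blast

lemma Fpow_lepoll:
  assumes inf: "infinite B" shows "Fpow B \<lesssim> B"
proof -
  define Fn where "Fn n = {A. A \<subseteq> B \<and> finite A \<and> card A = n}" for n :: nat
  have Fn: "Fn n \<lesssim> B" for n
  proof (induction n)
    case 0
    have "Fn 0 \<subseteq> {{}}" by (auto simp: Fn_def)
    then have "finite (Fn 0)" by (rule finite_subset) simp
    then show ?case using finite_lepoll_infinite[OF inf] by blast
  next
    case (Suc n)
    have "Fn (Suc n) \<subseteq> (\<lambda>(x, A). insert x A) ` (B \<times> Fn n)"
    proof
      fix A assume A: "A \<in> Fn (Suc n)"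
      then have "A \<noteq> {}" by (auto simp: Fn_def)
      then obtain x where x: "x \<in> A" by blast
      have "A - {x} \<in> Fn n" using A x by (auto simp: Fn_def)
      moreover have "x \<in> B" using A x by (auto simp: Fn_def)
      moreover have "A = insert x (A - {x})" using x by blast
      ultimately show "A \<in> (\<lambda>(x, A). insert x A) ` (B \<times> Fn n)"
        by (intro image_eqI[of _ _ "(x, A - {x})"]) auto
    qed
    then have "Fn (Suc n) \<lesssim> B \<times> Fn n" by (rule subset_image_lepoll)
    also have "B \<times> Fn n \<lesssim> B \<times> B" by (rule times_lepoll_mono[OF lepoll_refl Suc.IH])
    also have "B \<times> B \<lesssim> B" by (rule sq_lepoll[OF inf])
    finally show ?case .
  qed
  have "Fpow B \<subseteq> (\<Union>n\<in>(UNIV::nat set). Fn n)" by (auto simp: Fpow_def Fn_def)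
  then have "Fpow B \<lesssim> (\<Union>n\<in>(UNIV::nat set). Fn n)" by (rule subset_imp_lepoll)
  also have "\<dots> \<lesssim> (UNIV::nat set) \<times> B" by (rule UN_lepoll_Times) (rule Fn)
  also have "(UNIV::nat set) \<times> B \<lesssim> B \<times> B"
    by (rule times_lepoll_mono[OF _ lepoll_refl]) (use inf infinite_le_lepoll in blast)
  also have "B \<times> B \<lesssim> B" by (rule sq_lepoll[OF inf])
  finally show ?thesis .
qed

lemma core:
  fixes K :: "'i set" and g :: "'i \<Rightarrow> 'a set"
  assumes inf: "infinite K"
    and fin: "\<And>\<xi>. \<xi> \<in> K \<Longrightarrow> finite (g \<xi>) \<and> g \<xi> \<noteq> {}"
    and small: "g ` K \<prec> K"
    and pt: "\<And>x. {\<xi> \<in> K. x \<in> g \<xi>} \<prec> K"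
  shows "\<exists>I \<subseteq> g ` K. (\<forall>G\<in>I. \<forall>H\<in>I. G \<noteq> H \<longrightarrow> G \<inter> H = {}) \<and> (\<Union>G\<in>I. {\<xi>\<in>K. g \<xi> = G}) \<approx> K"
proof -
  define KC where "KC G = {\<xi>\<in>K. g \<xi> = G}" for G
  define S where "S A = {\<xi>\<in>K. g \<xi> \<inter> A \<noteq> {}}" for A
  define low where "low I G = {H\<in>I. KC H \<prec> KC G}" for I G
  define \<Phi> where "\<Phi> = {I. I \<subseteq> g ` K \<and> (\<forall>G\<in>I. \<forall>H\<in>I. G \<noteq> H \<longrightarrow> G \<inter> H = {})
     \<and> (\<forall>G\<in>I. \<forall>H\<in>I. G \<noteq> H \<longrightarrow> KC G \<prec> KC H \<or> KC H \<prec> KC G)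
     \<and> (\<forall>G\<in>I. S (\<Union>(low I G)) \<lesssim> KC G)}"
  define P where "P I J \<longleftrightarrow> I \<subseteq> J \<and> (\<forall>G\<in>J-I. \<forall>H\<in>I. KC H \<prec> KC G)" for I J
  have po: "partial_order_on \<Phi> (relation_of P \<Phi>)"
  proof (rule partial_order_on_relation_ofI)
    show "P a a" for a by (simp add: P_def)
    show "P a c" if "P a b" "P b c" for a b c
      using that unfolding P_def by blast
    show "a = b" if "P a b" "P b a" for a b using that unfolding P_def by blast
  qed
  have ch: "\<exists>u\<in>\<Phi>. \<forall>a\<in>C. P a u" if C: "C \<in> Chains (relation_of P \<Phi>)" for C
  proof -
    have C\<Phi>: "C \<subseteq> \<Phi>" using Chains_relation_of C by blast
    have cmp: "P a b \<or> P b a" if "a\<in>C" "b\<in>C" for a b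
      using C that unfolding Chains_def relation_of_def by blast
    let ?U = "\<Union>C"
    have key: "low ?U G = low I0 G" if "G \<in> I0" "I0 \<in> C" for G I0
    proof
      show "low ?U G \<subseteq> low I0 G"
      proof
        fix H assume "H \<in> low ?U G"
        then obtain I1 where I1: "I1 \<in> C" "H \<in> I1" "KC H \<prec> KC G" by (auto simp: low_def)
        have "H \<in> I0"
        proof (rule ccontr)
          assume "H \<notin> I0"
          with cmp[OF that(2) I1(1)] I1(2) have "P I0 I1" unfolding P_def by blast
          then have "KC G \<prec> KC H" using \<open>H \<notin> I0\<close> I1(2) that(1) unfolding P_def by blast
          then show False using I1(3) lesspoll_asym by blast
        qed
        then show "H \<in> low I0 G" using I1(3) by (simp add: low_def)
      qed
      show "low I0 G \<subseteq> low ?U G" using that(2) by (auto simp: low_def)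
    qed
    have U: "?U \<in> \<Phi>"
    proof -
      have "?U \<subseteq> g ` K" using C\<Phi> by (auto simp: \<Phi>_def)
      moreover have "\<forall>G\<in>?U. \<forall>H\<in>?U. G \<noteq> H \<longrightarrow> G \<inter> H = {} \<and> (KC G \<prec> KC H \<or> KC H \<prec> KC G)"
      proof (intro ballI impI)
        fix G H assume "G \<in> ?U" "H \<in> ?U" "G \<noteq> H"
        then obtain I1 I2 where "I1 \<in> C" "I2 \<in> C" "G \<in> I1" "H \<in> I2" by auto
        then obtain I3 where "I3 \<in> C" "G \<in> I3" "H \<in> I3"
          using cmp[of I1 I2] unfolding P_def by blast
        then show "G \<inter> H = {} \<and> (KC G \<prec> KC H \<or> KC H \<prec> KC G)"
          using C\<Phi> \<open>G \<noteq> H\<close> unfolding \<Phi>_def by blast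
      qed
      moreover have "\<forall>G\<in>?U. S (\<Union>(low ?U G)) \<lesssim> KC G"
      proof
        fix G assume "G \<in> ?U"
        then obtain I0 where "I0 \<in> C" "G \<in> I0" by auto
        then show "S (\<Union>(low ?U G)) \<lesssim> KC G"
          using key C\<Phi> unfolding \<Phi>_def by auto
      qed
      ultimately show ?thesis unfolding \<Phi>_def by blast
    qed
    moreover have "P a ?U" if "a \<in> C" for a
      unfolding P_def
    proof (intro conjI ballI)
      show "a \<subseteq> ?U" using that by auto
      fix G H assume "G \<in> ?U - a" "H \<in> a"
      then obtain I1 where "I1 \<in> C" "G \<in> I1" "G \<notin> a" by auto
      with cmp[OF that \<open>I1 \<in> C\<close>] \<open>H \<in> a\<close> show "KC H \<prec> KC G" unfolding P_def by blast
    qed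
    ultimately show ?thesis by blast
  qed
  obtain M where M: "M \<in> \<Phi>" and Mmax: "\<And>a. a \<in> \<Phi> \<Longrightarrow> P M a \<Longrightarrow> a = M"
    using predicate_Zorn[OF po ch] by blast
  have Msub: "M \<subseteq> g ` K" and Mdisj: "\<And>G H. G\<in>M \<Longrightarrow> H\<in>M \<Longrightarrow> G \<noteq> H \<Longrightarrow> G \<inter> H = {}"
    and Mcmp: "\<And>G H. G\<in>M \<Longrightarrow> H\<in>M \<Longrightarrow> G \<noteq> H \<Longrightarrow> KC G \<prec> KC H \<or> KC H \<prec> KC G"
    and Mlow: "\<And>G. G\<in>M \<Longrightarrow> S (\<Union>(low M G)) \<lesssim> KC G"
    using M unfolding \<Phi>_def by auto
  define W where "W = (\<Union>G\<in>M. KC G)"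
  show ?thesis
  proof (rule ccontr)
    assume neg: "\<not> ?thesis"
    have "W \<subseteq> K" by (auto simp: W_def KC_def)
    moreover have "\<not> W \<approx> K" using neg Msub Mdisj unfolding W_def KC_def by blast
    ultimately have WK: "W \<prec> K" using lesspoll_def subset_imp_lepoll by blast
    have KCK: "KC G \<prec> K" if G: "G \<in> g ` K" for G
    proof -
      obtain \<xi> where "\<xi> \<in> K" "G = g \<xi>" using G by auto
      then obtain x where "x \<in> G" using fin by blast
      then have "KC G \<subseteq> {\<xi> \<in> K. x \<in> g \<xi>}" by (auto simp: KC_def)
      then show ?thesis using lesspoll_trans1[OF subset_imp_lepoll pt] by blast
    qed
    have Sfin: "S G \<prec> K" if "G \<in> g ` K" for G
    proof -
      have "finite G" using that fin by auto
      have "S G = (\<Union>x\<in>G. {\<xi> \<in> K. x \<in> g \<xi>})" by (auto simp: S_def)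
      also have "\<dots> \<prec> K" by (rule finite_UN_lesspoll[OF \<open>finite G\<close> inf]) (rule pt)
      finally show ?thesis .
    qed
    have SM: "S (\<Union>M) \<prec> K"
    proof (cases "\<exists>G\<in>M. \<forall>H\<in>M. H \<noteq> G \<longrightarrow> KC H \<prec> KC G")
      case True
      then obtain G where G: "G \<in> M" "\<forall>H\<in>M. H \<noteq> G \<longrightarrow> KC H \<prec> KC G" by blast
      have "low M G = M - {G}" using G by (auto simp: low_def)
      then have eq: "\<Union>M = \<Union>(low M G) \<union> G" using G by blast
      have Sun: "S (A \<union> B) = S A \<union> S B" for A B unfolding S_def by blast
      have e2: "S (\<Union>M) = S (\<Union>(low M G)) \<union> S G" by (subst eq) (rule Sun)
      have l1: "S (\<Union>(low M G)) \<prec> K"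
        by (rule lesspoll_trans1[OF Mlow[OF G(1)] KCK]) (use G(1) Msub in blast)
      have l2: "S G \<prec> K" by (rule Sfin) (use G(1) Msub in blast)
      show ?thesis unfolding e2 by (rule Un_lesspoll[OF inf l1 l2])
    next
      case False
      have "S G \<lesssim> W" if "G \<in> M" for G
      proof -
        have "\<not> (\<forall>H\<in>M. H \<noteq> G \<longrightarrow> KC H \<prec> KC G)" using False that by blast
        then obtain H where H: "H \<in> M" "H \<noteq> G" "\<not> KC H \<prec> KC G" by blast
        then have "KC G \<prec> KC H" using Mcmp[OF that H(1)] by blast
        then have "G \<in> low M H" using that by (simp add: low_def)
        then have s1: "S G \<subseteq> S (\<Union>(low M H))" unfolding S_def by blast
        have s2: "S (\<Union>(low M H)) \<lesssim> KC H" using Mlow H(1) by blast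
        have s3: "KC H \<subseteq> W" using H(1) unfolding W_def by blast
        show ?thesis
          by (rule lepoll_trans[OF subset_imp_lepoll[OF s1] lepoll_trans[OF s2 subset_imp_lepoll[OF s3]]])
      qed
      then have "(\<Union>G\<in>M. S G) \<lesssim> M \<times> W" by (rule UN_lepoll_Times)
      moreover have "M \<times> W \<prec> K"
        by (rule Times_lesspoll[OF inf lesspoll_trans1[OF subset_imp_lepoll[OF Msub] small] WK])
      moreover have "S (\<Union>M) \<subseteq> (\<Union>G\<in>M. S G)" by (auto simp: S_def)
      ultimately show ?thesis by (meson subset_imp_lepoll lepoll_trans lesspoll_trans1)
    qed
    define Z where "Z = S (\<Union>M) \<union> W"
    have ZK: "Z \<prec> K" unfolding Z_def using Un_lesspoll[OF inf SM WK] .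
    have "\<exists>\<xi>. \<xi> \<in> K \<and> \<xi> \<notin> S (\<Union>M) \<and> \<not> KC (g \<xi>) \<lesssim> Z"
    proof (rule ccontr)
      assume nex: "\<not> (\<exists>\<xi>. \<xi> \<in> K \<and> \<xi> \<notin> S (\<Union>M) \<and> \<not> KC (g \<xi>) \<lesssim> Z)"
      have all: "KC (g \<xi>) \<lesssim> Z" if "\<xi> \<in> K - S (\<Union>M)" for \<xi> using nex that by blast
      have t1: "K - S (\<Union>M) \<subseteq> (\<Union>G\<in>g ` (K - S (\<Union>M)). KC G)" by (auto simp: KC_def)
      have t2: "(\<Union>G\<in>g ` (K - S (\<Union>M)). KC G) \<lesssim> g ` (K - S (\<Union>M)) \<times> Z" by (rule UN_lepoll_Times) (use all in auto)
      have "K - S (\<Union>M) \<lesssim> g ` (K - S (\<Union>M)) \<times> Z" by (rule lepoll_trans[OF subset_imp_lepoll[OF t1] t2])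
      moreover have "g ` (K - S (\<Union>M)) \<prec> K"
        by (rule lesspoll_trans1[OF subset_imp_lepoll small]) blast
      ultimately have "K - S (\<Union>M) \<prec> K" using lesspoll_trans1 Times_lesspoll[OF inf _ ZK] by blast
      then have "S (\<Union>M) \<union> (K - S (\<Union>M)) \<prec> K" using Un_lesspoll[OF inf SM] by blast
      moreover have "K \<subseteq> S (\<Union>M) \<union> (K - S (\<Union>M))" by blast
      ultimately have "K \<prec> K" using lesspoll_trans1[OF subset_imp_lepoll] by blast
      then show False by simp
    qed
    then obtain \<xi> where \<xi>: "\<xi> \<in> K" "\<xi> \<notin> S (\<Union>M)" "\<not> KC (g \<xi>) \<lesssim> Z" by blast
    define G where "G = g \<xi>"
    have ZG: "Z \<prec> KC G" using \<xi>(3) lesspoll_iff_not G_def by blast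
    have Gdisj: "G \<inter> \<Union>M = {}" using \<xi>(1,2) by (auto simp: S_def G_def)
    have Gne: "G \<noteq> {}" using fin \<xi>(1) G_def by blast
    have GnM: "G \<notin> M" using Gdisj Gne by blast
    have lowH: "KC H \<prec> KC G" if "H \<in> M" for H
    proof -
      have "KC H \<subseteq> Z" using that by (auto simp: Z_def W_def)
      then show ?thesis using lesspoll_trans1[OF subset_imp_lepoll ZG] by blast
    qed
    have lowG: "low (insert G M) G = M"
      using lowH by (auto simp: low_def)
    have lowM: "low (insert G M) H = low M H" if "H \<in> M" for H
      using lowH[OF that] lesspoll_asym by (auto simp: low_def)
    have "insert G M \<in> \<Phi>"
      unfolding \<Phi>_def
    proof (intro CollectI conjI ballI impI)
      show "insert G M \<subseteq> g ` K" using Msub \<xi>(1) G_def by auto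
      fix A B assume A: "A \<in> insert G M" and B: "B \<in> insert G M" and AB: "A \<noteq> B"
      show "A \<inter> B = {}"
        using A B AB Mdisj Gdisj by blast
      show "KC A \<prec> KC B \<or> KC B \<prec> KC A"
        using A B AB Mcmp lowH by blast
    next
      fix A assume A: "A \<in> insert G M"
      show "S (\<Union>(low (insert G M) A)) \<lesssim> KC A"
      proof (cases "A = G")
        case True
        have "S (\<Union>M) \<subseteq> Z" by (auto simp: Z_def)
        then have "S (\<Union>M) \<lesssim> KC G" using lesspoll_imp_lepoll[OF lesspoll_trans1[OF subset_imp_lepoll ZG]] by blast
        then show ?thesis using True lowG by simp
      next
        case False
        then have "A \<in> M" using A by blast
        then show ?thesis using lowM Mlow by simp
      qed
    qed
    moreover have "P M (insert G M)" unfolding P_def using lowH by blast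
    ultimately have "insert G M = M" using Mmax by blast
    then show False using GnM by blast
  qed
qed


theorem mainTheorem4:
  fixes K :: "'i set" and F :: "'i \<Rightarrow> 'a set"
  assumes "infinite K"
    and "\<And>\<xi>. \<xi> \<in> K \<Longrightarrow> finite (F \<xi>) \<and> F \<xi> \<noteq> {}"
    and "\<And>x. {\<xi> \<in> K. x \<in> F \<xi>} \<prec> K"
  shows "\<exists>D x. D \<subseteq> K \<and> D \<approx> K \<and> (\<forall>\<xi>\<in>D. x \<xi> \<in> F \<xi>) \<and>
           (\<forall>\<alpha>\<in>D. \<forall>\<beta>\<in>D. x \<alpha> \<in> F \<beta> \<longrightarrow> x \<alpha> = x \<beta>)"
proof -
  note inf = assms(1) and fin = assms(2) and pt = assms(3)
  define Dis where "Dis = {D. D \<subseteq> K \<and> (\<forall>\<alpha>\<in>D. \<forall>\<beta>\<in>D. \<alpha> \<noteq> \<beta> \<longrightarrow> F \<alpha> \<inter> F \<beta> = {})}"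
  have chn: "\<forall>C\<in>chains Dis. \<Union>C \<in> Dis"
  proof
    fix C assume C: "C \<in> chains Dis"
    have "\<Union>C \<subseteq> K" using C unfolding chains_def Dis_def by blast
    moreover have "F \<alpha> \<inter> F \<beta> = {}" if "\<alpha> \<in> \<Union>C" "\<beta> \<in> \<Union>C" "\<alpha> \<noteq> \<beta>" for \<alpha> \<beta>
    proof -
      have "\<alpha> \<in> \<Union>C" "\<beta> \<in> \<Union>C" by fact+
      then obtain C1 C2 where "C1 \<in> C" "C2 \<in> C" "\<alpha> \<in> C1" "\<beta> \<in> C2" by blast
      moreover have "C1 \<subseteq> C2 \<or> C2 \<subseteq> C1" using chainsD[OF C \<open>C1 \<in> C\<close> \<open>C2 \<in> C\<close>] .
      ultimately obtain C3 where "C3 \<in> C" "\<alpha> \<in> C3" "\<beta> \<in> C3" by blast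
      then show ?thesis using C \<open>\<alpha> \<noteq> \<beta>\<close> unfolding chains_def Dis_def by blast
    qed
    ultimately show "\<Union>C \<in> Dis" unfolding Dis_def by blast
  qed
  obtain D' where D': "D' \<in> Dis" and Dmax: "\<And>X. X \<in> Dis \<Longrightarrow> D' \<subseteq> X \<Longrightarrow> X = D'"
    using Zorn_Lemma[OF chn] by blast
  have D'K: "D' \<subseteq> K" and D'dis: "\<And>\<alpha> \<beta>. \<alpha> \<in> D' \<Longrightarrow> \<beta> \<in> D' \<Longrightarrow> \<alpha> \<noteq> \<beta> \<Longrightarrow> F \<alpha> \<inter> F \<beta> = {}"
    using D' unfolding Dis_def by auto
  show ?thesis
  proof (cases "D' \<approx> K")
    case True
    define x where "x \<xi> = (SOME y. y \<in> F \<xi>)" for \<xi>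
    have xF: "x \<xi> \<in> F \<xi>" if "\<xi> \<in> K" for \<xi>
      unfolding x_def using fin[OF that] by (simp add: some_in_eq)
    have "\<forall>\<alpha>\<in>D'. \<forall>\<beta>\<in>D'. x \<alpha> \<in> F \<beta> \<longrightarrow> x \<alpha> = x \<beta>"
      using D'dis xF D'K by blast
    then show ?thesis using True D'K xF by blast
  next
    case False
    then have D'small: "D' \<prec> K" using D'K subset_imp_lepoll lesspoll_def by blast
    define B where "B = (\<Union>\<xi>\<in>D'. F \<xi>)"
    have meet: "F \<xi> \<inter> B \<noteq> {}" if "\<xi> \<in> K" for \<xi>
    proof (cases "\<xi> \<in> D'")
      case True
      then show ?thesis using fin[OF that] unfolding B_def by blast
    next
      case False
      show ?thesis
      proof
        assume e: "F \<xi> \<inter> B = {}"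
        have "insert \<xi> D' \<in> Dis" using D'K D'dis that e unfolding Dis_def B_def by blast
        then have "insert \<xi> D' = D'" using Dmax by blast
        then show False using False by blast
      qed
    qed
    have Bsmall: "B \<prec> K"
    proof (cases "finite D'")
      case True
      then have "finite B" unfolding B_def using fin D'K by (intro finite_UN_I) auto
      then show ?thesis using inf finite_lesspoll_infinite by blast
    next
      case False
      have "B \<lesssim> D'" unfolding B_def by (rule UN_finite_lepoll[OF False]) (use fin D'K in blast)
      then show ?thesis using lesspoll_trans1 D'small by blast
    qed
    have Fpsmall: "Fpow B \<prec> K"
    proof (cases "finite B")
      case True
      then have "finite (Fpow B)" unfolding Fpow_def by simp
      then show ?thesis using inf finite_lesspoll_infinite by blast
    next
      case False
      then show ?thesis using Fpow_lepoll lesspoll_trans1 Bsmall by blast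
    qed
    define g where "g \<xi> = F \<xi> \<inter> B" for \<xi>
    have gK: "g ` K \<prec> K"
      by (rule lesspoll_trans1[OF subset_imp_lepoll Fpsmall]) (use fin in \<open>auto simp: g_def Fpow_def\<close>)
    have gfin: "finite (g \<xi>) \<and> g \<xi> \<noteq> {}" if "\<xi> \<in> K" for \<xi>
      using fin[OF that] meet[OF that] unfolding g_def by simp
    have gpt: "{\<xi> \<in> K. x \<in> g \<xi>} \<prec> K" for x
      by (rule lesspoll_trans1[OF subset_imp_lepoll pt]) (auto simp: g_def)
    obtain I where I: "I \<subseteq> g ` K" "\<forall>G\<in>I. \<forall>H\<in>I. G \<noteq> H \<longrightarrow> G \<inter> H = {}"
      "(\<Union>G\<in>I. {\<xi>\<in>K. g \<xi> = G}) \<approx> K"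
      using core[OF inf gfin gK gpt] by blast
    define D where "D = (\<Union>G\<in>I. {\<xi>\<in>K. g \<xi> = G})"
    define x where "x \<xi> = (SOME y. y \<in> g \<xi>)" for \<xi>
    have xg: "x \<xi> \<in> g \<xi>" if "\<xi> \<in> K" for \<xi>
      unfolding x_def using gfin[OF that] by (simp add: some_in_eq)
    have DK: "D \<subseteq> K" unfolding D_def by blast
    have eqs: "x \<alpha> = x \<beta>" if "\<alpha> \<in> D" "\<beta> \<in> D" "x \<alpha> \<in> F \<beta>" for \<alpha> \<beta>
    proof -
      have "x \<alpha> \<in> g \<alpha>" using xg DK that(1) by blast
      then have "x \<alpha> \<in> g \<beta>" using that(3) unfolding g_def by blast
      moreover have "g \<alpha> \<in> I" "g \<beta> \<in> I" using that(1,2) unfolding D_def by auto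
      ultimately have "g \<alpha> = g \<beta>" using I(2) \<open>x \<alpha> \<in> g \<alpha>\<close> by blast
      then show ?thesis unfolding x_def by simp
    qed
    have xF: "\<forall>\<xi>\<in>D. x \<xi> \<in> F \<xi>" using xg DK unfolding g_def by blast
    have Deq: "D \<approx> K" using I(3) unfolding D_def .
    show ?thesis
    proof (intro exI[of _ D] exI[of _ x] conjI)
      show "\<forall>\<alpha>\<in>D. \<forall>\<beta>\<in>D. x \<alpha> \<in> F \<beta> \<longrightarrow> x \<alpha> = x \<beta>" using eqs by blast
    qed (fact DK Deq xF)+
  qed
qed

end
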